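(* Under the standing setup below, let $\theta$ be a function on (an open subset of) $M$ with $e_2(\theta)=e_3(\theta)=0$ and $e_1(\theta)=-\lambda_2$ (such a function exists locally), and set $$V=\frac{-(b_1+i\lambda_2)E_0+E_1}{\sqrt{1+b_1^2+\lambda_2^2}}.$$ Then $D_{E_2}V=D_{E_3}V=0$ and $D_{E_1}V=3\lambda_2\, iV$. Consequently $V$ takes values in the unit circle of a fixed complex line $\mathbb{C}\,v\subset\mathbb{C}^4$, and writing $V=e^{it}v$ one has $e_1(t)=3\lambda_2$, $e_2(t)=e_3(t)=0$; in particular, after adding a constant to $\theta$, $\theta=-t/3$.
   Context: Standing setup: $\mathbb{C}P^3(4)$ carries the Fubini–Study metric of constant holomorphic sectional curvature $4$, complex structure $J$, and $\pi:S^7(1)\subset\mathbb{C}^4\to\mathbb{C}P^3(4)$ is the Hopf projection. $M$ is a connected $3$-dimensional non-minimal Lagrangian submanifold of $\mathbb{C}P^3(4)$ attaining equality at every point in $\delta_M\le 2+\tfrac32\|H\|^2$ (here $\delta_M=\tau-\inf K$, $\tau$ the scalar curvature, $H=\frac13\operatorname{trace}h$). Let $h$ be the second fundamental form and $C(X,Y,Z)=\langle h(X,Y),JZ\rangle$. Locally there is an orthonormal frame $e_1,e_2,e_3$ with $C(e_2,e_2,e_2)=-C(e_3,e_3,e_2)=:a$, $C(e_1,e_1,e_1)=4\lambda_2$, $C(e_2,e_2,e_1)=C(e_3,e_3,e_1)=\lambda_2$ with $\lambda_2\neq0$, and all other components zero up to symmetry. $E_0:M\to S^7(1)\subset\mathbb{C}^4$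 is a horizontal lift of $M$ (i.e. $\pi\circ E_0$ is the inclusion and $dE_0(X)$ is orthogonal to $E_0$ and $iE_0$), $E_j=dE_0(e_j)$, and $D$ is the flat connection of $\mathbb{C}^4=\mathbb{R}^8$; $D_{E_j}$ denotes differentiation along $e_j$. There is a smooth function $b_1$ such that $D_{E_1}E_1=4\lambda_2 iE_1-E_0$ and $D_{E_j}E_1=(b_1+i\lambda_2)E_j$ for $j=2,3$; moreover $e_2(\lambda_2)=e_3(\lambda_2)=e_2(b_1)=e_3(b_1)=0$, $e_1(\lambda_2)=2\lambda_2b_1$ and $e_1(b_1)=-(1+b_1^2+3\lambda_2^2)$. *)

theory Defs
  imports "HOL-Analysis.Analysis"
begin

text \<open>Local model: an open connected set U in real^3 plays the role of a chart of M.\<close>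

definition vderiv :: "('a::real_normed_vector \<Rightarrow> 'a) \<Rightarrow> ('a \<Rightarrow> 'b::real_normed_vector) \<Rightarrow> 'a \<Rightarrow> 'b"
  where "vderiv X f p = frechet_derivative f (at p) (X p)"

end

theory Submission
  imports Defs "HOL-Library.Real_Mod"
begin

lemma norm_vsmult: "norm (c *s (x::complex^'n)) = norm c * norm x"
  unfolding norm_vec_def L2_set_def
  by (simp add: norm_mult power_mult_distrib sum_distrib_left[symmetric] real_sqrt_mult)

lemma bb_vsmult: "bounded_bilinear (\<lambda>(c::complex) (x::complex^'n). c *s x)"
proof (rule bounded_bilinear.intro)
  show "\<exists>K. \<forall>a b. norm ((a::complex) *s (b::complex^'n)) \<le> norm a * norm b * K"
    by (rule exI[of _ 1]) (simp add: norm_vsmult)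
qed (simp_all add: vector_sadd_rdistrib vector_add_ldistrib vec_eq_iff algebra_simps)

lemmas has_derivative_vsmult[derivative_intros] = bounded_bilinear.FDERIV[OF bb_vsmult]


lemma V_deriv:
  fixes E0 E1 :: "'a::real_normed_vector \<Rightarrow> complex^4"
  assumes "(b has_derivative Db) (at p)" "(l has_derivative Dl) (at p)"
    "(E0 has_derivative D0) (at p)" "(E1 has_derivative D1) (at p)"
  shows "((\<lambda>p. (1 / sqrt (1 + (b p)\<^sup>2 + (l p)\<^sup>2)) *\<^sub>R
                  ((- (complex_of_real (b p) + \<i> * complex_of_real (l p))) *s E0 p + E1 p)) has_derivative
     (\<lambda>h. (- (b p * Db h + l p * Dl h) / ((1 + (b p)\<^sup>2 + (l p)\<^sup>2) * sqrt (1 + (b p)\<^sup>2 + (l p)\<^sup>2))) *\<^sub>R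
                  ((- (complex_of_real (b p) + \<i> * complex_of_real (l p))) *s E0 p + E1 p)
        + (1 / sqrt (1 + (b p)\<^sup>2 + (l p)\<^sup>2)) *\<^sub>R
           ((- (complex_of_real (Db h) + \<i> * complex_of_real (Dl h))) *s E0 p
            + (- (complex_of_real (b p) + \<i> * complex_of_real (l p))) *s D0 h + D1 h))) (at p)"
proof -
  define q where "q = 1 + (b p)\<^sup>2 + (l p)\<^sup>2"
  have qpos: "q > 0" unfolding q_def by (simp add: add_pos_nonneg)
  have dq: "((\<lambda>x. 1 + (b x)\<^sup>2 + (l x)\<^sup>2) has_derivative (\<lambda>h. 2 * b p * Db h + 2 * l p * Dl h)) (at p)"
    by (auto intro!: derivative_eq_intros assms)
  have dg: "((\<lambda>x. 1 / sqrt (1 + (b x)\<^sup>2 + (l x)\<^sup>2)) has_derivative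
     (\<lambda>h. (- (b p * Db h + l p * Dl h) / (q * sqrt q)))) (at p)"
  proof -
    have d1: "((\<lambda>y. 1 / sqrt y) has_real_derivative (-1/(2 * q * sqrt q))) (at q)"
      using qpos by (auto intro!: derivative_eq_intros simp: field_simps power2_eq_square)
    have "((\<lambda>x. 1 / sqrt (1 + (b x)\<^sup>2 + (l x)\<^sup>2)) has_derivative
     (\<lambda>h. (-1/(2 * q * sqrt q)) * (2 * b p * Db h + 2 * l p * Dl h))) (at p)"
      using has_derivative_compose[OF dq d1[unfolded has_field_derivative_def q_def]]
      by (simp add: q_def)
    then show ?thesis
      by (rule has_derivative_eq_rhs) (use qpos in \<open>auto simp: fun_eq_iff divide_simps\<close>)
  qed
  have dc: "((\<lambda>x. (- (complex_of_real (b x) + \<i> * complex_of_real (l x)))) has_derivative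
     (\<lambda>h. (- (complex_of_real (Db h) + \<i> * complex_of_real (Dl h))))) (at p)"
    by (auto intro!: derivative_eq_intros assms)
  show ?thesis
    apply (rule has_derivative_eq_rhs)
     apply (rule has_derivative_scaleR has_derivative_add has_derivative_vsmult dg dc assms)+
    apply (auto simp: q_def fun_eq_iff algebra_simps)
    done
qed

lemma span3:
  fixes f :: "real^3 \<Rightarrow> 'b::real_inner"
  assumes lf: "linear f"
    and o: "f a \<bullet> f a = 1" "f b \<bullet> f b = 1" "f c \<bullet> f c = 1"
      "f a \<bullet> f b = 0" "f a \<bullet> f c = 0" "f b \<bullet> f c = 0"
  shows "x \<in> span {a, b, c}"
proof -
  let ?B = "{a, b, c}"
  have fd: "f a \<noteq> f b" "f a \<noteq> f c" "f b \<noteq> f c"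
    using o by (metis zero_neq_one)+
  have d: "a \<noteq> b" "a \<noteq> c" "b \<noteq> c" using fd by metis+
  have inj: "inj_on f ?B" using fd unfolding inj_on_def by auto
  have ii: "independent (f ` ?B)"
  proof (rule pairwise_orthogonal_independent)
    have oc: "f b \<bullet> f a = 0" "f c \<bullet> f a = 0" "f c \<bullet> f b = 0" using o by (simp_all add: inner_commute)
    show "pairwise orthogonal (f ` ?B)"
      unfolding pairwise_def orthogonal_def image_insert image_empty using o oc by auto
    show "0 \<notin> f ` ?B" unfolding image_insert image_empty using o by auto
  qed
  have indep: "independent ?B"
  proof (rule ccontr)
    assume "\<not> independent ?B"
    then obtain y where y: "y \<in> ?B" "y \<in> span (?B - {y})" unfolding dependent_def by blast
    then have "f y \<in> f ` span (?B - {y})" by auto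
    also have "\<dots> = span (f ` (?B - {y}))" using span_linear_image[OF lf] by simp
    also have "f ` (?B - {y}) = f ` ?B - {f y}" using inj y(1) by (auto simp: inj_on_def)
    finally have "dependent (f ` ?B)" using y(1) unfolding dependent_def by blast
    with ii show False by simp
  qed
  have "UNIV \<subseteq> span ?B"
  proof (rule card_ge_dim_independent[OF _ indep])
    show "dim (UNIV::(real^3) set) \<le> card ?B" using d by simp
  qed simp
  then show ?thesis by blast
qed

lemma lin0:
  fixes g :: "real^3 \<Rightarrow> 'b::real_vector"
  assumes "linear g" "g a = 0" "g b = 0" "g c = 0" "x \<in> span {a,b,c}"
  shows "g x = 0"
  by (rule linear_eq_0_on_span[OF assms(1) _ assms(5)]) (use assms(2-4) in blast)
lemma alg1:
  fixes E0 E1 :: "complex^4" and b l :: real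
  defines "s \<equiv> sqrt (1 + b\<^sup>2 + l\<^sup>2)"
  shows "(- (b * (-(1 + b\<^sup>2 + 3 * l\<^sup>2)) + l * (2 * l * b)) / ((1 + b\<^sup>2 + l\<^sup>2) * s)) *\<^sub>R
           ((- (complex_of_real b + \<i> * complex_of_real l)) *s E0 + E1)
        + (1 / s) *\<^sub>R ((- (complex_of_real (-(1 + b\<^sup>2 + 3 * l\<^sup>2)) + \<i> * complex_of_real (2 * l * b))) *s E0
            + (- (complex_of_real b + \<i> * complex_of_real l)) *s E1 + ((\<i> * complex_of_real (4 * l)) *s E1 - E0))
      = (\<i> * complex_of_real (3 * l)) *s ((1 / s) *\<^sub>R ((- (complex_of_real b + \<i> * complex_of_real l)) *s E0 + E1))"
proof -
  have q: "1 + b\<^sup>2 + l\<^sup>2 > 0" by (simp add: add_pos_nonneg)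
  have sp: "s > 0" unfolding s_def using q by simp
  have k: "(- (b * (-(1 + b\<^sup>2 + 3 * l\<^sup>2)) + l * (2 * l * b)) / ((1 + b\<^sup>2 + l\<^sup>2) * s)) = b * (1 / s)"
  proof -
    have "- (b * (-(1 + b\<^sup>2 + 3 * l\<^sup>2)) + l * (2 * l * b)) = b * (1 + b\<^sup>2 + l\<^sup>2)"
      by (simp add: algebra_simps power2_eq_square)
    then show ?thesis using q sp by simp
  qed
  define u where "u = complex_of_real (1 / s)"
  have uu: "complex_of_real (b / s) = complex_of_real b * u" unfolding u_def by simp
  show ?thesis
    unfolding k
    apply (simp add: vec_eq_iff)
    apply (simp add: scaleR_conv_of_real)
    apply (intro allI)
    using sp apply (simp add: field_simps power2_eq_square)
    done
qed

lemma alg2: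
  fixes E0 E2 :: "complex^4" and b l g :: real
  shows "(- (b * 0 + l * 0) / z) *\<^sub>R X
        + g *\<^sub>R ((- (complex_of_real 0 + \<i> * complex_of_real 0)) *s E0
            + (- (complex_of_real b + \<i> * complex_of_real l)) *s E2 + (complex_of_real b + \<i> * complex_of_real l) *s E2)
      = 0"
  by (simp add: vec_eq_iff)

lemma dif:
  assumes "f differentiable_on U" "open U" "p \<in> U"
  shows "(f has_derivative frechet_derivative f (at p)) (at p)"
  using assms by (metis at_within_open differentiable_on_def frechet_derivative_works)

lemma c_decomp: "(c::complex) *s (x::complex^'n) = Re c *\<^sub>R x + Im c *\<^sub>R (\<i> *s x)"
  by (simp add: vec_eq_iff complex_eq_iff)

lemma normV:
  fixes x y :: "complex^4" and b l :: real
  assumes "norm x = 1" "y \<bullet> x = 0" "y \<bullet> (\<i> *s x) = 0" "y \<bullet> y = 1"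
  shows "norm ((1 / sqrt (1 + b\<^sup>2 + l\<^sup>2)) *\<^sub>R ((- (complex_of_real b + \<i> * complex_of_real l)) *s x + y)) = 1"
proof -
  let ?c = "- (complex_of_real b + \<i> * complex_of_real l)"
  have q: "1 + b\<^sup>2 + l\<^sup>2 > 0" by (simp add: add_pos_nonneg)
  have i0: "(?c *s x) \<bullet> y = 0"
  proof -
    have "(?c *s x) \<bullet> y = y \<bullet> (?c *s x)" by (rule inner_commute)
    also have "\<dots> = 0" unfolding c_decomp[of ?c]
      by (simp only: inner_add_right inner_scaleR_right assms(2,3) mult_zero_right add_0)
    finally show ?thesis .
  qed
  have ny: "norm y = 1" using assms(4) by (simp add: norm_eq_sqrt_inner)
  have nc: "(cmod ?c)\<^sup>2 = b\<^sup>2 + l\<^sup>2"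
    by (simp add: cmod_power2)
  have "(norm (?c *s x + y))\<^sup>2 = (norm (?c *s x))\<^sup>2 + (norm y)\<^sup>2"
    by (rule norm_add_Pythagorean) (use i0 in \<open>simp add: orthogonal_def\<close>)
  also have "\<dots> = 1 + b\<^sup>2 + l\<^sup>2" by (simp only: norm_vsmult power_mult_distrib nc ny assms(1)) simp
  finally have "norm (?c *s x + y) = sqrt (1 + b\<^sup>2 + l\<^sup>2)"
    by (metis norm_ge_zero real_sqrt_unique)
  then show ?thesis using q by simp
qed

theorem mainTheorem3:
  fixes U :: "(real^3) set"
    and e1 e2 e3 :: "real^3 \<Rightarrow> real^3"
    and E0 :: "real^3 \<Rightarrow> complex^4"
    and lam2 b1 theta :: "real^3 \<Rightarrow> real"
  defines "E1 \<equiv> vderiv e1 E0" and "E2 \<equiv> vderiv e2 E0" and "E3 \<equiv> vderiv e3 E0"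
  defines "V \<equiv> (\<lambda>p. (1 / sqrt (1 + (b1 p)\<^sup>2 + (lam2 p)\<^sup>2)) *\<^sub>R
                  ((- (complex_of_real (b1 p) + \<i> * complex_of_real (lam2 p))) *s E0 p + E1 p))"
  assumes U: "open U" "connected U"
    and reg: "E0 differentiable_on U" "E1 differentiable_on U" "E2 differentiable_on U"
             "E3 differentiable_on U" "lam2 differentiable_on U" "b1 differentiable_on U"
             "theta differentiable_on U"
    and sphere: "\<And>p. p \<in> U \<Longrightarrow> norm (E0 p) = 1"
    and horiz: "\<And>p. p \<in> U \<Longrightarrow>
         E1 p \<bullet> E0 p = 0 \<and> E2 p \<bullet> E0 p = 0 \<and> E3 p \<bullet> E0 p = 0 \<and>
         E1 p \<bullet> (\<i> *s E0 p) = 0 \<and> E2 p \<bullet> (\<i> *s E0 p) = 0 \<and> E3 p \<bullet> (\<i> *s E0 p) = 0"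
    and orthonormal: "\<And>p. p \<in> U \<Longrightarrow>
         E1 p \<bullet> E1 p = 1 \<and> E2 p \<bullet> E2 p = 1 \<and> E3 p \<bullet> E3 p = 1 \<and>
         E1 p \<bullet> E2 p = 0 \<and> E1 p \<bullet> E3 p = 0 \<and> E2 p \<bullet> E3 p = 0"
    and lagrangian: "\<And>p. p \<in> U \<Longrightarrow>
         E1 p \<bullet> (\<i> *s E2 p) = 0 \<and> E1 p \<bullet> (\<i> *s E3 p) = 0 \<and> E2 p \<bullet> (\<i> *s E3 p) = 0"
    and lam2_nz: "\<And>p. p \<in> U \<Longrightarrow> lam2 p \<noteq> 0"
    and DE1E1: "\<And>p. p \<in> U \<Longrightarrow>
         vderiv e1 E1 p = (\<i> * complex_of_real (4 * lam2 p)) *s E1 p - E0 p"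
    and DE2E1: "\<And>p. p \<in> U \<Longrightarrow>
         vderiv e2 E1 p = (complex_of_real (b1 p) + \<i> * complex_of_real (lam2 p)) *s E2 p"
    and DE3E1: "\<And>p. p \<in> U \<Longrightarrow>
         vderiv e3 E1 p = (complex_of_real (b1 p) + \<i> * complex_of_real (lam2 p)) *s E3 p"
    and lam2_eqs: "\<And>p. p \<in> U \<Longrightarrow>
         vderiv e2 lam2 p = 0 \<and> vderiv e3 lam2 p = 0 \<and> vderiv e1 lam2 p = 2 * lam2 p * b1 p"
    and b1_eqs: "\<And>p. p \<in> U \<Longrightarrow>
         vderiv e2 b1 p = 0 \<and> vderiv e3 b1 p = 0 \<and>
         vderiv e1 b1 p = - (1 + (b1 p)\<^sup>2 + 3 * (lam2 p)\<^sup>2)"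
    and theta_eqs: "\<And>p. p \<in> U \<Longrightarrow>
         vderiv e2 theta p = 0 \<and> vderiv e3 theta p = 0 \<and> vderiv e1 theta p = - lam2 p"
  shows "(\<forall>p\<in>U. vderiv e2 V p = 0 \<and> vderiv e3 V p = 0 \<and>
                 vderiv e1 V p = (\<i> * complex_of_real (3 * lam2 p)) *s V p)
       \<and> (\<exists>v::complex^4. norm v = 1 \<and>
            (\<forall>p\<in>U. \<exists>s::real. V p = cis s *s v) \<and>
            (\<exists>t::real^3 \<Rightarrow> real. t differentiable_on U \<and> (\<forall>p\<in>U. V p = cis (t p) *s v)) \<and>
            (\<forall>t::real^3 \<Rightarrow> real. t differentiable_on U \<and> (\<forall>p\<in>U. V p = cis (t p) *s v) \<longrightarrow>
                (\<forall>p\<in>U. vderiv e1 t p = 3 * lam2 p \<and> vderiv e2 t p = 0 \<and> vderiv e3 t p = 0) \<and>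
                (\<exists>c::real. \<forall>p\<in>U. theta p + c = - t p / 3)))"
proof -
  have opn: "open U" using U by simp
  note dd = dif[OF _ opn]
  have E1d: "\<And>p. E1 p = frechet_derivative E0 (at p) (e1 p)" unfolding E1_def vderiv_def by simp
  have E2d: "\<And>p. E2 p = frechet_derivative E0 (at p) (e2 p)" unfolding E2_def vderiv_def by simp
  have E3d: "\<And>p. E3 p = frechet_derivative E0 (at p) (e3 p)" unfolding E3_def vderiv_def by simp
  have part1: "vderiv e2 V p = 0 \<and> vderiv e3 V p = 0 \<and>
                 vderiv e1 V p = (\<i> * complex_of_real (3 * lam2 p)) *s V p
        \<and> (V has_derivative frechet_derivative V (at p)) (at p)" if p: "p \<in> U" for p
  proof -
    note hV = V_deriv[OF dd[OF reg(6) p] dd[OF reg(5) p] dd[OF reg(1) p] dd[OF reg(2) p], folded V_def]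
    note fV = frechet_derivative_at[OF hV, symmetric]
    have "vderiv e2 V p = 0"
      unfolding vderiv_def fV
      using b1_eqs[OF p] lam2_eqs[OF p] DE2E1[OF p] unfolding vderiv_def E2d[symmetric]
      by (simp add: vec_eq_iff)
    moreover have "vderiv e3 V p = 0"
      unfolding vderiv_def fV
      using b1_eqs[OF p] lam2_eqs[OF p] DE3E1[OF p] unfolding vderiv_def E3d[symmetric]
      by (simp add: vec_eq_iff)
    moreover have "vderiv e1 V p = (\<i> * complex_of_real (3 * lam2 p)) *s V p"
      unfolding vderiv_def fV
      using b1_eqs[OF p] lam2_eqs[OF p] DE1E1[OF p] unfolding vderiv_def E1d[symmetric]
      apply (simp only: )
      unfolding V_def by (rule alg1)
    moreover have "(V has_derivative frechet_derivative V (at p)) (at p)"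
      using hV fV by simp
    ultimately show ?thesis by blast
  qed
  have nV: "norm (V p) = 1" if p: "p \<in> U" for p
    unfolding V_def using sphere[OF p] horiz[OF p] orthonormal[OF p]
    by (intro normV) auto
  define W where "W = (\<lambda>p. cis (3 * theta p) *s V p)"
  have Wd0: "(W has_derivative (\<lambda>h. 0)) (at p)" if p: "p \<in> U" for p
  proof -
    note dth = dd[OF reg(7) p]
    let ?Dt = "frechet_derivative theta (at p)"
    let ?FV = "frechet_derivative V (at p)"
    have dcis: "((\<lambda>x. cis (3 * theta x)) has_derivative
        (\<lambda>h. (\<i> * complex_of_real (3 * ?Dt h)) * cis (3 * theta p))) (at p)"
    proof -
      have din: "((\<lambda>x. \<i> * complex_of_real (3 * theta x)) has_derivative
          (\<lambda>h. \<i> * complex_of_real (3 * ?Dt h))) (at p)"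
        by (auto intro!: derivative_eq_intros dth)
      have dexp: "(exp has_derivative (\<lambda>h. exp (\<i> * complex_of_real (3 * theta p)) * h))
           (at (\<i> * complex_of_real (3 * theta p)))"
        using DERIV_exp[of "\<i> * complex_of_real (3 * theta p)"] unfolding has_field_derivative_def .
      show ?thesis
        unfolding cis_conv_exp
        using has_derivative_compose[OF din dexp] by (simp add: algebra_simps)
    qed
    have hW: "(W has_derivative (\<lambda>h. cis (3 * theta p) *s ?FV h +
                 ((\<i> * complex_of_real (3 * ?Dt h)) * cis (3 * theta p)) *s V p)) (at p)"
      unfolding W_def by (rule has_derivative_vsmult[OF dcis conjunct2[OF conjunct2[OF conjunct2[OF part1[OF p]]]]])
    let ?DW = "\<lambda>h. cis (3 * theta p) *s ?FV h +
                 ((\<i> * complex_of_real (3 * ?Dt h)) * cis (3 * theta p)) *s V p"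
    have lin: "linear ?DW" using has_derivative_linear[OF hW] .
    have z1: "?DW (e1 p) = 0"
      using part1[OF p] theta_eqs[OF p] unfolding vderiv_def
      by (simp add: vec_eq_iff algebra_simps)
    have z2: "?DW (e2 p) = 0"
      using part1[OF p] theta_eqs[OF p] unfolding vderiv_def
      by (simp add: vec_eq_iff)
    have z3: "?DW (e3 p) = 0"
      using part1[OF p] theta_eqs[OF p] unfolding vderiv_def
      by (simp add: vec_eq_iff)
    have sp: "h \<in> span {e1 p, e2 p, e3 p}" for h
      apply (rule span3[OF has_derivative_linear[OF dd[OF reg(1) p]]])
      using orthonormal[OF p] unfolding E1d E2d E3d by auto
    have "?DW = (\<lambda>h. 0)"
      using lin0[OF lin z1 z2 z3 sp] by (simp add: fun_eq_iff)
    then show ?thesis using hW by simp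
  qed
  have Wcont: "continuous_on U W"
    by (rule continuous_at_imp_continuous_on) (use Wd0 has_derivative_continuous in blast)
  have "W constant_on U"
    by (rule has_derivative_zero_connected_constant_on[OF U(2) opn finite.emptyI Wcont])
       (use Wd0 has_derivative_at_withinI in blast)
  then obtain v0 where v0: "\<And>p. p \<in> U \<Longrightarrow> W p = v0" unfolding constant_on_def by blast
  obtain v :: "complex^4" where nv: "norm v = 1" and Vv: "\<And>p. p \<in> U \<Longrightarrow> V p = cis (- (3 * theta p)) *s v"
  proof (cases "U = {}")
    case True
    obtain v :: "complex^4" where "norm v = 1" using vector_choose_size[of 1] by auto
    then show ?thesis using that True by blast
  next
    case False
    then obtain p0 where p0: "p0 \<in> U" by blast
    have "norm v0 = norm (cis (3 * theta p0) *s V p0)" using v0[OF p0] unfolding W_def by simp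
    also have "\<dots> = 1" unfolding norm_vsmult nV[OF p0] by simp
    finally have "norm v0 = 1" .
    moreover have "V p = cis (- (3 * theta p)) *s v0" if "p \<in> U" for p
      using v0[OF that] unfolding W_def by (auto simp: vector_smult_assoc cis_mult)
    ultimately show ?thesis using that by blast
  qed
  have v_nz: "v \<noteq> 0" using nv by auto
  have tex: "\<exists>t::real^3 \<Rightarrow> real. t differentiable_on U \<and> (\<forall>p\<in>U. V p = cis (t p) *s v)"
    by (rule exI[of _ "\<lambda>p. - (3 * theta p)"]) (use Vv reg(7) in \<open>auto intro!: derivative_intros\<close>)
  have tall: "(\<forall>p\<in>U. vderiv e1 t p = 3 * lam2 p \<and> vderiv e2 t p = 0 \<and> vderiv e3 t p = 0) \<and>
                (\<exists>c::real. \<forall>p\<in>U. theta p + c = - t p / 3)"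
    if td: "t differentiable_on U" and tV: "\<forall>p\<in>U. V p = cis (t p) *s v" for t
  proof -
    define f where "f = (\<lambda>p. (t p + 3 * theta p) / (2 * pi))"
    have fint: "f p \<in> \<int>" if p: "p \<in> U" for p
    proof -
      have "cis (t p) = cis (- (3 * theta p))" using tV Vv[OF p] p v_nz by auto
      then have "cis (t p) * cis (3 * theta p) = 1" by (simp add: cis_mult)
      then have "cis (t p + 3 * theta p) = 1" by (simp add: cis_mult)
      then obtain n where "t p + 3 * theta p = of_int n * (2 * pi)" using cis_eq_1_iff by blast
      then show ?thesis unfolding f_def by simp
    qed
    have fc: "continuous_on U f" unfolding f_def
      using differentiable_imp_continuous_on[OF td] differentiable_imp_continuous_on[OF reg(7)]
      by (intro continuous_intros) auto
    have "f constant_on U"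
    proof (rule continuous_discrete_range_constant[OF U(2) fc])
      fix x assume x: "x \<in> U"
      show "\<exists>e>0. \<forall>y. y \<in> U \<and> f y \<noteq> f x \<longrightarrow> e \<le> norm (f y - f x)"
      proof (intro exI[of _ 1] conjI allI impI)
        fix y assume y: "y \<in> U \<and> f y \<noteq> f x"
        have "f y - f x \<in> \<int>" using fint x y by auto
        moreover have "f y - f x \<noteq> 0" using y by simp
        ultimately show "1 \<le> norm (f y - f x)" using Ints_nonzero_abs_ge1 by (metis real_norm_def)
      qed simp
    qed
    then obtain C where C: "\<And>p. p \<in> U \<Longrightarrow> f p = C" unfolding constant_on_def by blast
    have tt: "t p = 2 * pi * C - 3 * theta p" if p: "p \<in> U" for p
      using C[OF p] unfolding f_def by (simp add: field_simps)
    have der: "vderiv e t p = - 3 * vderiv e theta p" if p: "p \<in> U" for p e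
    proof -
      have "((\<lambda>x. 2 * pi * C - 3 * theta x) has_derivative (\<lambda>h. - 3 * frechet_derivative theta (at p) h)) (at p)"
        by (auto intro!: derivative_eq_intros dd[OF reg(7) p])
      then have "(t has_derivative (\<lambda>h. - 3 * frechet_derivative theta (at p) h)) (at p)"
        by (rule has_derivative_transform_within_open[OF _ opn p]) (simp add: tt)
      then show ?thesis unfolding vderiv_def using frechet_derivative_at by metis
    qed
    show ?thesis
    proof
      show "\<forall>p\<in>U. vderiv e1 t p = 3 * lam2 p \<and> vderiv e2 t p = 0 \<and> vderiv e3 t p = 0"
        using der theta_eqs by simp
      show "\<exists>c::real. \<forall>p\<in>U. theta p + c = - t p / 3"
        by (rule exI[of _ "- (2 * pi * C) / 3"]) (simp add: tt field_simps)
    qed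
  qed
  show ?thesis
    using part1 nv Vv tex tall by blast
qed

end
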